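(* Assume $q>2$. For every integer $d\ge1$, $$\operatorname{BG}_{q^d-2}=-\sum_{d\ge i>j\ge0}\frac{b_i(\theta^{q^d})}{l_i\,l_j}.$$
   Context: $A=\mathbb{F}_q[\theta]$, $A^+(k)$ the monic polynomials of degree $k$. For an integer $n\ge0$, $\operatorname{BG}_n=\sum_{k\ge0}\sum_{a\in A^+(k)}a^{n}\in A$ (the inner sums vanish for all sufficiently large $k$, so this is a finite sum). $l_0=1$, $l_i=(\theta-\theta^{q^i})l_{i-1}$ for $i\ge1$; $b_0(Y)=1$, $b_i(Y)=\prod_{k=0}^{i-1}(Y-\theta^{q^k})$ for $i\ge1$, evaluated at $Y=\theta^{q^d}$. *)

theory Defs
  imports "HOL-Library.Cardinality" "HOL-Computational_Algebra.Polynomial" "HOL-Computational_Algebra.Fraction_Field"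
begin

text \<open>A = F_q[theta] is rendered as 'a poly for a finite field 'a with q = CARD('a::{finite,field});
  theta is the indeterminate [:0,1:].\<close>

definition theta :: "'a::field poly" where
  "theta = [:0, 1:]"

definition Spow :: "nat \<Rightarrow> nat \<Rightarrow> 'a::{finite,field} poly" where
  "Spow k n = (\<Sum>a\<in>{a :: 'a poly. lead_coeff a = 1 \<and> degree a = k}. a ^ n)"

text \<open>BG_n = sum over all k of Spow k n; only finitely many terms are nonzero,
  so we sum over the (finite) set of k with nonzero term.\<close>
definition BG :: "nat \<Rightarrow> 'a::{finite,field} poly" where
  "BG n = (\<Sum>k\<in>{k. Spow k n \<noteq> (0 :: 'a poly)}. Spow k n)"

definition lcar :: "nat \<Rightarrow> 'a::{finite,field} poly" where
  "lcar i = (\<Prod>k\<in>{1..i}. theta - theta ^ (CARD('a::{finite,field}) ^ k))"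

text \<open>b_i(Y) evaluated at Y = theta^(q^d).\<close>
definition bcar :: "nat \<Rightarrow> nat \<Rightarrow> 'a::{finite,field} poly" where
  "bcar d i = (\<Prod>k<i. theta ^ (CARD('a::{finite,field}) ^ d) - theta ^ (CARD('a::{finite,field}) ^ k))"

end

theory Submission
  imports Defs
begin

lemma sum_single:
  assumes "finite A" "m \<in> A" "\<And>i. i \<in> A \<Longrightarrow> i \<noteq> m \<Longrightarrow> f i = 0"
  shows "sum f A = f m"
proof -
  have "sum f A = f m + sum f (A - {m})" using assms by (simp add: sum.remove)
  also have "sum f (A - {m}) = 0" using assms by (intro sum.neutral) auto
  finally show ?thesis by simp
qed

lemma roots_prod_eq:
  fixes P :: "'b::idom poly"
  assumes dP: "degree P \<le> k" and fZ: "finite Z" and cZ: "card Z = k"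
    and rZ: "\<And>z. z \<in> Z \<Longrightarrow> poly P z = 0"
  shows "P = smult (coeff P k) (\<Prod>z\<in>Z. [:-z,1:])"
proof -
  let ?R = "\<Prod>z\<in>Z. [:-z,1:] :: 'b poly"
  have dR: "degree ?R = k"
    using cZ by (subst degree_prod_eq_sum_degree) auto
  have lR: "coeff ?R k = 1"
    using lead_coeff_prod[of "\<lambda>z. [:-z,1:]" Z] dR by simp
  define Q where "Q = P - smult (coeff P k) ?R"
  have dQ: "degree Q \<le> k" unfolding Q_def
    using dP dR by (intro degree_diff_le) (auto intro: order.trans[OF degree_smult_le])
  have cQ: "coeff Q k = 0" unfolding Q_def using lR by simp
  have rQ: "poly Q z = 0" if "z \<in> Z" for z
  proof -
    have "poly ?R z = 0" using that fZ by (auto simp: poly_prod prod_zero_iff)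
    then show ?thesis using rZ[OF that] by (simp add: Q_def)
  qed
  show ?thesis
  proof (rule ccontr)
    assume "P \<noteq> smult (coeff P k) ?R"
    hence Q0: "Q \<noteq> 0" by (simp add: Q_def)
    have "degree Q \<noteq> k" using cQ Q0 by auto
    hence lt: "degree Q < k" using dQ by simp
    have "Z \<subseteq> {x. poly Q x = 0}" using rQ by auto
    hence "card Z \<le> card {x. poly Q x = 0}"
      using poly_roots_finite[OF Q0] by (intro card_mono) auto
    also have "\<dots> \<le> degree Q" by (rule card_poly_roots_bound[OF Q0])
    finally show False using lt cZ by simp
  qed
qed

lemma degree_pderiv_le: "degree (pderiv p) \<le> degree p - 1"
  by (rule degree_le) (auto simp: coeff_pderiv coeff_eq_0)

lemma synth_div:
  fixes g :: "'b::comm_ring_1 poly"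
  assumes f: "f = [:-v,1:] * g"
  shows "degree g < j + L \<Longrightarrow> coeff g j = (\<Sum>i<L. coeff f (j+1+i) * v^i)"
proof (induction L arbitrary: j)
  case 0 then show ?case by (simp add: coeff_eq_0)
next
  case (Suc L)
  have f2: "f = smult (-v) g + pCons 0 g" using f by simp
  have rec: "coeff g j = coeff f (Suc j) + v * coeff g (Suc j)"
    by (simp add: f2)
  have "coeff g (Suc j) = (\<Sum>i<L. coeff f (Suc j+1+i) * v^i)"
    using Suc.prems by (intro Suc.IH) simp
  moreover have "(\<Sum>i<Suc L. coeff f (j+1+i) * v^i) = coeff f (j+1+0) * v^0 + (\<Sum>i<L. coeff f (j+1+Suc i) * v^(Suc i))"
    by (rule sum.lessThan_Suc_shift)
  ultimately show ?case using rec
    by (simp add: sum_distrib_left mult_ac del: sum.lessThan_Suc)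
qed

section \<open>Power sums over finite additive subgroups\<close>

locale fsub =
  fixes V :: "'b::idom set"
  assumes fin: "finite V" and zero_in: "0 \<in> V"
    and diff_in: "\<And>x y. x \<in> V \<Longrightarrow> y \<in> V \<Longrightarrow> x - y \<in> V"
begin

lemma neg_in: "x \<in> V \<Longrightarrow> - x \<in> V"
  using diff_in[OF zero_in, of x] by simp

lemma add_in: "x \<in> V \<Longrightarrow> y \<in> V \<Longrightarrow> x + y \<in> V"
  using diff_in[of x "- y"] neg_in[of y] by simp

definition ee :: "'b poly" where "ee = (\<Prod>v\<in>V. [:-v,1:])"
definition cc :: 'b where "cc = (\<Prod>w\<in>V-{0}. - w)"
definition ps :: "nat \<Rightarrow> 'b" where "ps m = (\<Sum>v\<in>V. v ^ m)"

lemma card_pos: "card V \<ge> 1"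
  using fin zero_in by (metis One_nat_def Suc_leI card_gt_0_iff empty_iff)

lemma degree_ee: "degree ee = card V"
  unfolding ee_def by (subst degree_prod_eq_sum_degree) auto

lemma coeff_ee_top: "coeff ee (card V) = 1"
  using lead_coeff_prod[of "\<lambda>v. [:-v,1:]" V] degree_ee by (simp add: ee_def)

lemma pderiv_ee: "pderiv ee = (\<Sum>v\<in>V. \<Prod>w\<in>V-{v}. [:-w,1:])"
  unfolding ee_def pderiv_prod by (simp add: pderiv_pCons)

lemma poly_pderiv_ee: assumes u: "u \<in> V" shows "poly (pderiv ee) u = cc"
proof -
  have "poly (pderiv ee) u = (\<Sum>v\<in>V. \<Prod>w\<in>V-{v}. u - w)"
    by (simp add: pderiv_ee poly_sum poly_prod)
  also have "\<dots> = (\<Prod>w\<in>V-{u}. u - w)"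
  proof (rule sum_single[OF fin u])
    fix v assume "v \<in> V" "v \<noteq> u"
    then show "(\<Prod>w\<in>V-{v}. u - w) = 0" using fin u
      by (intro prod_zero) (auto intro!: bexI[of _ u])
  qed
  also have "\<dots> = (\<Prod>w\<in>V-{0}. - w)"
    by (rule prod.reindex_bij_witness[of _ "\<lambda>w. w + u" "\<lambda>w. w - u"])
       (auto simp: u add_in diff_in)
  finally show ?thesis by (simp add: cc_def)
qed

lemma pderiv_ee_const: "pderiv ee = [:cc:]"
proof (rule ccontr)
  define Q where "Q = pderiv ee - [:cc:]"
  assume "pderiv ee \<noteq> [:cc:]"
  hence Q0: "Q \<noteq> 0" by (simp add: Q_def)
  have "degree Q \<le> card V - 1"
    unfolding Q_def using degree_pderiv_le[of ee] degree_ee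
    by (intro degree_diff_le) auto
  moreover have "V \<subseteq> {x. poly Q x = 0}" using poly_pderiv_ee by (auto simp: Q_def)
  hence "card V \<le> card {x. poly Q x = 0}"
    using poly_roots_finite[OF Q0] by (intro card_mono) auto
  moreover have "card {x. poly Q x = 0} \<le> degree Q" by (rule card_poly_roots_bound[OF Q0])
  ultimately show False using card_pos by simp
qed

lemma coeff_pderiv_ee: "coeff (pderiv ee) j = (\<Sum>i<card V. coeff ee (j+1+i) * ps i)"
proof -
  have "coeff (pderiv ee) j = (\<Sum>v\<in>V. coeff (\<Prod>w\<in>V-{v}. [:-w,1:]) j)"
    by (simp add: pderiv_ee coeff_sum)
  also have "\<dots> = (\<Sum>v\<in>V. \<Sum>i<card V. coeff ee (j+1+i) * v^i)"
  proof (rule sum.cong[OF refl])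
    fix v assume v: "v \<in> V"
    have e: "ee = [:-v,1:] * (\<Prod>w\<in>V-{v}. [:-w,1:])"
      unfolding ee_def using fin v by (simp add: prod.remove)
    have "degree (\<Prod>w\<in>V-{v}. [:-w,1:]) = card (V - {v})"
      by (subst degree_prod_eq_sum_degree) auto
    hence "degree (\<Prod>w\<in>V-{v}. [:-w,1:]) < j + card V"
      using fin v card_pos by (simp add: card_Diff_singleton)
    then show "coeff (\<Prod>w\<in>V-{v}. [:-w,1:]) j = (\<Sum>i<card V. coeff ee (j+1+i) * v^i)"
      by (rule synth_div[OF e])
  qed
  also have "\<dots> = (\<Sum>i<card V. coeff ee (j+1+i) * ps i)"
    by (subst sum.swap) (simp add: ps_def sum_distrib_left)
  finally show ?thesis .
qed

lemma ps_zero: "m + 2 \<le> card V \<Longrightarrow> ps m = 0"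
proof (induction m rule: less_induct)
  case (less m)
  define N where "N = card V"
  have j: "N - 1 - m \<ge> 1" using less.prems by (simp add: N_def)
  have "0 = coeff (pderiv ee) (N - 1 - m)" using j
    by (cases "N - 1 - m") (auto simp: pderiv_ee_const)
  also have "\<dots> = (\<Sum>i<N. coeff ee (N - 1 - m + 1 + i) * ps i)"
    by (simp add: coeff_pderiv_ee N_def)
  also have "\<dots> = coeff ee (N - 1 - m + 1 + m) * ps m"
  proof (rule sum_single)
    show "m \<in> {..<N}" using less.prems by (simp add: N_def)
    fix i assume i: "i \<in> {..<N}" "i \<noteq> m"
    show "coeff ee (N - 1 - m + 1 + i) * ps i = 0"
    proof (cases "i < m")
      case True
      then show ?thesis using less.IH[of i] less.prems by simp
    next
      case False
      hence "N - 1 - m + 1 + i > degree ee" using i j by (simp add: degree_ee N_def)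
      then show ?thesis by (simp add: coeff_eq_0)
    qed
  qed simp
  also have "N - 1 - m + 1 + m = N" using j by simp
  finally show ?case by (simp add: coeff_ee_top N_def)
qed

lemma ps_top: "ps (card V - 1) = cc"
proof -
  define N where "N = card V"
  have "cc = coeff (pderiv ee) 0" by (simp add: pderiv_ee_const)
  also have "\<dots> = (\<Sum>i<N. coeff ee (0 + 1 + i) * ps i)"
    by (simp add: coeff_pderiv_ee N_def)
  also have "\<dots> = coeff ee (0 + 1 + (N - 1)) * ps (N - 1)"
  proof (rule sum_single)
    show "N - 1 \<in> {..<N}" using card_pos by (simp add: N_def)
    fix i assume i: "i \<in> {..<N}" "i \<noteq> N - 1"
    hence "i + 2 \<le> card V" by (simp add: N_def)
    then show "coeff ee (0 + 1 + i) * ps i = 0" by (simp add: ps_zero)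
  qed simp
  finally show ?thesis using card_pos by (simp add: coeff_ee_top N_def)
qed

lemma coset_sum:
  "(\<Sum>v\<in>V. (x + v) ^ m) = (\<Sum>i\<le>m. of_nat (m choose i) * x ^ (m - i) * ps i)"
proof -
  have "(\<Sum>v\<in>V. (x + v) ^ m) = (\<Sum>v\<in>V. \<Sum>i\<le>m. of_nat (m choose i) * v ^ i * x ^ (m - i))"
    by (simp add: binomial_ring add.commute)
  also have "\<dots> = (\<Sum>i\<le>m. of_nat (m choose i) * x ^ (m - i) * ps i)"
    by (subst sum.swap) (simp add: ps_def sum_distrib_left sum_distrib_right mult_ac)
  finally show ?thesis .
qed

lemma coset_zero: "m + 2 \<le> card V \<Longrightarrow> (\<Sum>v\<in>V. (x + v) ^ m) = 0"
  by (simp add: coset_sum ps_zero)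

lemma coset_top: "(\<Sum>v\<in>V. (x + v) ^ (card V - 1)) = cc"
proof -
  have "(\<Sum>v\<in>V. (x + v) ^ (card V - 1)) =
     of_nat ((card V - 1) choose (card V - 1)) * x ^ (card V - 1 - (card V - 1)) * ps (card V - 1)"
    unfolding coset_sum
    by (rule sum_single) (auto simp: ps_zero)
  then show ?thesis using ps_top by simp
qed

end


lemma ff_card_ge2: "CARD('a::{finite,field}) \<ge> 2"
proof -
  have "card {0::'a, 1} = 2" by simp
  moreover have "card {0::'a, 1} \<le> CARD('a)" by (intro card_mono) auto
  ultimately show ?thesis by simp
qed

lemma ff_pow_card: "(x::'a::{finite,field}) ^ CARD('a) = x"
proof (cases "x = 0")
  case False
  have "x * (\<Prod>y\<in>UNIV-{0}. x * y) = x * x ^ (card (UNIV :: 'a set) - 1) * \<Prod>(UNIV-{0})"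
    by (simp add: prod.distrib mult_ac)
  also have "x * x ^ (card (UNIV :: 'a set) - 1) = x ^ Suc (card (UNIV :: 'a set) - 1)"
    by (subst power_Suc) auto
  also have "Suc (card (UNIV :: 'a set) - 1) = card (UNIV :: 'a set)"
    using finite_UNIV_card_ge_0[where ?'a = 'a] by simp
  also have "(\<Prod>y\<in>UNIV-{0}. x * y) = (\<Prod>y\<in>UNIV-{0}. y)"
    by (rule prod.reindex_bij_witness[of _ "\<lambda>y. y / x" "\<lambda>y. x * y"]) (use False in auto)
  finally show ?thesis
    by simp
qed (use finite_UNIV_card_ge_0[where ?'a = 'a] in auto)

lemma ff_pow_card_pow: "(x::'a::{finite,field}) ^ (CARD('a) ^ j) = x"
  by (induction j) (simp_all add: ff_pow_card power_mult mult.commute[of "CARD('a)"])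

lemma ff_pow_card_minus1: "(x::'a::{finite,field}) \<noteq> 0 \<Longrightarrow> x ^ (CARD('a) - 1) = 1"
proof -
  assume x: "x \<noteq> 0"
  have "x * x ^ (CARD('a) - 1) = x ^ CARD('a)"
    using ff_card_ge2[where 'a='a] by (metis One_nat_def Suc_diff_le le_trans one_le_numeral power_Suc diff_Suc_1)
  also have "\<dots> = x * 1" by (simp add: ff_pow_card)
  finally show ?thesis using x by simp
qed

lemma coeff_X1_pow: "coeff (([:0,1:] + 1 :: 'b::comm_ring_1 poly) ^ n) i = of_nat (n choose i)"
proof -
  have "([:0,1:] + 1 :: 'b poly) ^ n = (\<Sum>k\<le>n. of_nat (n choose k) * [:0,1:] ^ k * 1 ^ (n - k))"
    by (rule binomial_ring)
  also have "\<dots> = (\<Sum>k\<le>n. monom (of_nat (n choose k)) k)"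
    by (simp add: monom_altdef of_nat_poly)
  finally have e: "([:0,1:] + 1 :: 'b poly) ^ n = (\<Sum>k\<le>n. monom (of_nat (n choose k)) k)" .
  show ?thesis
  proof (cases "i \<le> n")
    case True
    then show ?thesis unfolding e coeff_sum coeff_monom
      by (subst sum_single[of _ i]) auto
  next
    case False
    then show ?thesis unfolding e coeff_sum coeff_monom by (auto simp: binomial_eq_0)
  qed
qed

lemma ff_binom_zero:
  assumes "0 < i" "i < CARD('a::{finite,field})"
  shows "(of_nat (CARD('a) choose i) :: 'a) = 0"
proof -
  define q where "q = CARD('a)"
  define P :: "'a poly" where "P = ([:0,1:] + 1) ^ q - monom 1 q - 1"
  have l: "([:0,1:] + 1 :: 'a poly) = [:1,1:]" by (simp add: one_pCons)
  have dP: "degree P \<le> q" unfolding P_def l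
    by (intro degree_diff_le) (auto simp: degree_linear_power degree_monom_le)
  have rP: "poly P z = 0" for z
    by (simp add: P_def poly_monom q_def ff_pow_card)
  have "P = smult (coeff P q) (\<Prod>z\<in>UNIV. [:-z,1:])"
    by (rule roots_prod_eq[OF dP]) (auto simp: q_def rP)
  moreover have "coeff P q = 0"
    using ff_card_ge2[where 'a='a] by (simp add: P_def coeff_X1_pow q_def)
  ultimately have "P = 0" by simp
  hence "coeff P i = 0" by simp
  then show ?thesis using assms by (simp add: P_def coeff_X1_pow q_def)
qed

lemma frob_add: "((x::'a::{finite,field} poly) + y) ^ CARD('a) = x ^ CARD('a) + y ^ CARD('a)"
proof -
  define n where "n = CARD('a)"
  have n2: "n \<ge> 2" using ff_card_ge2[where 'a='a] by (simp add: n_def)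
  have "(x + y) ^ n = (\<Sum>k\<le>n. of_nat (n choose k) * x ^ k * y ^ (n - k))"
    by (rule binomial_ring)
  also have "\<dots> = (\<Sum>k\<in>{0,n}. of_nat (n choose k) * x ^ k * y ^ (n - k))"
  proof (intro sum.mono_neutral_right ballI)
    fix k assume "k \<in> {..n} - {0, n}"
    hence k: "k > 0" "k < n" by auto
    have "(of_nat (n choose k) :: 'a poly) = [:of_nat (n choose k):]" by (simp add: of_nat_poly)
    also have "(of_nat (n choose k) :: 'a) = 0" using ff_binom_zero k by (simp add: n_def)
    finally show "of_nat (n choose k) * x ^ k * y ^ (n - k) = 0" by simp
  qed auto
  finally show ?thesis using n2 by (simp add: n_def add.commute)
qed

lemma frob_add_pow: "((x::'a::{finite,field} poly) + y) ^ (CARD('a) ^ j) = x ^ (CARD('a)^j) + y ^ (CARD('a)^j)"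
  by (induction j) (simp_all add: power_mult frob_add mult.commute[of "CARD('a)"])

lemma frob_sum_pow: "(\<Sum>i\<in>A. f i :: 'a::{finite,field} poly) ^ (CARD('a) ^ j) = (\<Sum>i\<in>A. f i ^ (CARD('a)^j))"
proof (induction A rule: infinite_finite_induct)
  case (empty) then show ?case using ff_card_ge2[where 'a='a] by (simp add: power_0_left)
qed (auto simp: frob_add_pow power_0_left)

lemma frob_diff: "((x::'a::{finite,field} poly) - y) ^ CARD('a) = x ^ CARD('a) - y ^ CARD('a)"
proof -
  have "((x - y) + y) ^ CARD('a) = (x - y) ^ CARD('a) + y ^ CARD('a)" by (rule frob_add)
  then show ?thesis by (simp add: algebra_simps)
qed

lemma ff_minus_one_pow: "(-1::'a::{finite,field}) ^ CARD('a) = -1"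
  by (rule ff_pow_card)

lemma wilson_ff: "(\<Prod>c\<in>UNIV-{0}. - c) = (-1::'a::{finite,field})"
proof -
  define q where "q = CARD('a)"
  have q2: "q \<ge> 2" using ff_card_ge2[where 'a='a] by (simp add: q_def)
  define P :: "'a poly" where "P = monom 1 (q - 1) - 1"
  have dP: "degree P \<le> q - 1" unfolding P_def
    by (intro degree_diff_le) (auto simp: degree_monom_le)
  have cZ: "card (UNIV - {0::'a}) = q - 1" by (simp add: q_def card_Diff_singleton)
  have rP: "poly P z = 0" if "z \<in> UNIV - {0}" for z
    using that ff_pow_card_minus1[of z] by (simp add: P_def poly_monom q_def)
  have "P = smult (coeff P (q - 1)) (\<Prod>z\<in>UNIV-{0}. [:-z,1:])"
    by (rule roots_prod_eq[OF dP _ cZ rP]) auto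
  moreover have "coeff P (q - 1) = 1" using q2 by (simp add: P_def)
  ultimately have "poly P 0 = poly (\<Prod>z\<in>UNIV-{0::'a}. [:-z,1:]) 0" by simp
  moreover have "poly P 0 = -1" using q2 by (simp add: P_def poly_monom)
  ultimately show ?thesis by (simp add: poly_prod)
qed


section \<open>The spaces V_k and monic polynomials\<close>

definition Vk :: "nat \<Rightarrow> 'a::field poly set" where "Vk k = {v. \<forall>i\<ge>k. coeff v i = 0}"
definition Mk :: "nat \<Rightarrow> 'a::field poly set" where "Mk k = {a. lead_coeff a = 1 \<and> degree a = k}"

lemma theta_pow: "theta ^ n = (monom 1 n :: 'a::field poly)"
  by (simp add: theta_def monom_altdef)

lemma Vk_0: "Vk 0 = {0}"
  by (auto simp: Vk_def intro: poly_eqI)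

lemma Vk_diff: "x \<in> Vk k \<Longrightarrow> y \<in> Vk k \<Longrightarrow> x - y \<in> Vk k"
  by (auto simp: Vk_def)

lemma Vk_zero: "0 \<in> Vk k" by (simp add: Vk_def)

lemma Vk_smult: "v \<in> Vk k \<Longrightarrow> smult c v \<in> Vk k" by (simp add: Vk_def)

lemma Vk_Suc: "Vk (Suc k) = (\<lambda>(c,v). monom c k + v) ` (UNIV \<times> Vk k)"
proof (intro set_eqI iffI)
  fix w :: "'a poly" assume w: "w \<in> Vk (Suc k)"
  have "w = (\<lambda>(c,v). monom c k + v) (coeff w k, w - monom (coeff w k) k)" by simp
  moreover have "(coeff w k, w - monom (coeff w k) k) \<in> UNIV \<times> Vk k"
    using w by (auto simp: Vk_def coeff_monom)
  ultimately show "w \<in> (\<lambda>(c,v). monom c k + v) ` (UNIV \<times> Vk k)" by (rule image_eqI)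
next
  fix w :: "'a poly" assume "w \<in> (\<lambda>(c,v). monom c k + v) ` (UNIV \<times> Vk k)"
  then show "w \<in> Vk (Suc k)" by (auto simp: Vk_def coeff_monom)
qed

lemma Vk_Suc_inj: "inj_on (\<lambda>(c,v). monom c k + v) (UNIV \<times> Vk k)"
proof (rule inj_onI, clarify)
  fix c v c' v' assume v: "v \<in> Vk k" and v': "v' \<in> Vk k" and e: "monom c k + v = monom c' k + v'"
  have "coeff (monom c k + v) k = coeff (monom c' k + v') k" using e by simp
  hence "c = c'" using v v' by (simp add: Vk_def)
  with e show "c = c' \<and> v = v'" by simp
qed

lemma finite_card_Vk: "finite (Vk k :: 'a::{finite,field} poly set) \<and> card (Vk k :: 'a poly set) = CARD('a) ^ k"
proof (induction k)
  case 0 then show ?case by (simp add: Vk_0)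
next
  case (Suc k)
  then show ?case
    by (simp add: Vk_Suc card_image[OF Vk_Suc_inj] card_cartesian_product)
qed

lemma finite_Vk: "finite (Vk k :: 'a::{finite,field} poly set)"
  using finite_card_Vk by blast

lemma card_Vk: "card (Vk k :: 'a::{finite,field} poly set) = CARD('a) ^ k"
  using finite_card_Vk by blast

lemma fsub_Vk: "fsub (Vk k :: 'a::{finite,field} poly set)"
  by unfold_locales (auto simp: finite_Vk Vk_zero Vk_diff)

lemma Mk_eq: "Mk k = (\<lambda>v. monom 1 k + v) ` Vk k"
proof (intro set_eqI iffI)
  fix a :: "'a poly" assume a: "a \<in> Mk k"
  have "a - monom 1 k \<in> Vk k"
    using a by (auto simp: Mk_def Vk_def coeff_monom coeff_eq_0)
  moreover have "a = monom 1 k + (a - monom 1 k)" by simp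
  ultimately show "a \<in> (\<lambda>v. monom 1 k + v) ` Vk k" by blast
next
  fix a :: "'a poly" assume "a \<in> (\<lambda>v. monom 1 k + v) ` Vk k"
  then obtain v where v: "v \<in> Vk k" and a: "a = monom 1 k + v" by blast
  have ck: "coeff a k = 1" using v by (simp add: a Vk_def)
  have "degree a \<le> k" using v by (intro degree_le) (auto simp: a Vk_def coeff_monom)
  moreover have "k \<le> degree a" using ck by (intro le_degree) simp
  ultimately show "a \<in> Mk k" using ck by (simp add: Mk_def)
qed

lemma Mk_inj: "inj_on (\<lambda>v. monom 1 k + v) (Vk k)"
  by (rule inj_onI) simp

lemma sum_Mk: "(\<Sum>a\<in>Mk k. f a) = (\<Sum>v\<in>Vk k. f (monom 1 k + v))"
  unfolding Mk_eq by (simp add: sum.reindex[OF Mk_inj])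

lemma prod_Mk: "(\<Prod>a\<in>Mk k. f a) = (\<Prod>v\<in>Vk k. f (monom 1 k + v))"
  unfolding Mk_eq by (simp add: prod.reindex[OF Mk_inj])

lemma finite_Mk: "finite (Mk k :: 'a::{finite,field} poly set)"
  unfolding Mk_eq by (intro finite_imageI finite_Vk)

lemma Mk_nonzero: "a \<in> Mk k \<Longrightarrow> a \<noteq> 0"
  by (auto simp: Mk_def)

lemma Mk_ps_zero:
  "m + 2 \<le> CARD('a) ^ k \<Longrightarrow> (\<Sum>a\<in>Mk k. a ^ m :: 'a::{finite,field} poly) = 0"
  unfolding sum_Mk using fsub.coset_zero[OF fsub_Vk] by (simp add: card_Vk)

lemma Mk_ps_top:
  "(\<Sum>a\<in>Mk k. a ^ (CARD('a) ^ k - 1) :: 'a::{finite,field} poly) = fsub.cc (Vk k)"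
  unfolding sum_Mk using fsub.coset_top[OF fsub_Vk] by (simp add: card_Vk)

lemma Mk_0: "Mk 0 = {1}"
  unfolding Mk_eq Vk_0 by simp


section \<open>Embedding into the fraction field\<close>

definition fr :: "'b::idom \<Rightarrow> 'b fract" where "fr x = Fract x 1"

lemma fr_add [simp]: "fr (x + y) = fr x + fr y" by (simp add: fr_def add_fract)
lemma fr_mult [simp]: "fr (x * y) = fr x * fr y" by (simp add: fr_def mult_fract)
lemma fr_diff [simp]: "fr (x - y) = fr x - fr y" by (simp add: fr_def diff_fract)
lemma fr_minus [simp]: "fr (- x) = - fr x" by (simp add: fr_def minus_fract)
lemma fr_0 [simp]: "fr 0 = 0" by (simp add: fr_def fract_collapse)
lemma fr_1 [simp]: "fr 1 = 1" by (simp add: fr_def fract_collapse)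
lemma fr_smult [simp]: "fr (smult c x) = fr [:c:] * fr x"
proof -
  have "smult c x = [:c:] * x" by simp
  then show ?thesis by (simp only: fr_mult)
qed
lemma fr_pow [simp]: "fr (x ^ n) = fr x ^ n" by (induction n) simp_all
lemma fr_sum [simp]: "fr (\<Sum>i\<in>A. f i) = (\<Sum>i\<in>A. fr (f i))"
  by (induction A rule: infinite_finite_induct) simp_all
lemma fr_prod [simp]: "fr (\<Prod>i\<in>A. f i) = (\<Prod>i\<in>A. fr (f i))"
  by (induction A rule: infinite_finite_induct) simp_all
lemma fr_const_1 [simp]: "fr [:1::'a::idom:] = 1"
proof -
  have "[:1:] = (1::'a poly)" by (simp add: one_pCons)
  then show ?thesis using fr_1 by metis
qed
lemma fr_eq_iff [simp]: "fr x = fr y \<longleftrightarrow> x = y" by (simp add: fr_def eq_fract)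
lemma fr_eq_0_iff [simp]: "fr x = 0 \<longleftrightarrow> x = 0"
  using fr_eq_iff[of x 0] by (simp del: fr_eq_iff)

definition emb :: "'a::field poly \<Rightarrow> 'a poly fract poly" where
  "emb a = map_poly (\<lambda>c. fr [:c:]) a"

lemma coeff_emb: "coeff (emb a) i = fr [:coeff a i:]"
  unfolding emb_def by (subst coeff_map_poly) simp_all

lemma degree_emb: "degree (emb a) = degree a"
  unfolding emb_def by (rule degree_map_poly) simp

lemma poly_emb: "poly (emb a) (fr w) = fr (\<Sum>i\<le>degree a. smult (coeff a i) (w ^ i))"
  by (simp add: poly_altdef degree_emb coeff_emb)

lemma frob_rep:
  "(a::'a::{finite,field} poly) ^ (CARD('a) ^ j) = (\<Sum>i\<le>degree a. smult (coeff a i) ((theta ^ (CARD('a) ^ j)) ^ i))"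
proof -
  define n where "n = CARD('a) ^ j"
  have "a ^ n = (\<Sum>i\<le>degree a. monom (coeff a i) i) ^ n" by (simp add: poly_as_sum_of_monoms)
  also have "\<dots> = (\<Sum>i\<le>degree a. monom (coeff a i) i ^ n)" unfolding n_def by (rule frob_sum_pow)
  also have "\<dots> = (\<Sum>i\<le>degree a. smult (coeff a i) ((theta ^ n) ^ i))"
  proof (rule sum.cong[OF refl])
    fix i
    have "monom (coeff a i) i ^ n = monom (coeff a i ^ n) (i * n)" by (rule monom_power)
    also have "coeff a i ^ n = coeff a i" unfolding n_def by (rule ff_pow_card_pow)
    also have "monom (coeff a i) (i * n) = smult (coeff a i) ((theta ^ n) ^ i)"
      by (simp add: theta_pow monom_power mult.commute smult_monom)
    finally show "monom (coeff a i) i ^ n = smult (coeff a i) ((theta ^ n) ^ i)" .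
  qed
  finally show ?thesis by (simp add: n_def)
qed

lemma poly_emb_frob:
  "poly (emb a) (fr (theta ^ (CARD('a) ^ j))) = fr ((a::'a::{finite,field} poly) ^ (CARD('a) ^ j))"
  by (simp only: poly_emb frob_rep[of a j])

lemma poly_emb_theta: "poly (emb a) (fr theta) = fr (a::'a::{finite,field} poly)"
  using poly_emb_frob[of a 0] by (simp only: power_0 power_one_right)


section \<open>Interpolation argument\<close>

lemma theta_pow_inj: "theta ^ m = (theta ^ n :: 'a::field poly) \<Longrightarrow> m = n"
proof -
  assume "theta ^ m = (theta ^ n :: 'a poly)"
  hence "degree (monom (1::'a) m) = degree (monom (1::'a) n)" by (simp add: theta_pow)
  then show "m = n" by (simp add: degree_monom_eq)
qed

lemma theta_pow_q_inj: "inj (\<lambda>j. fr (theta ^ (CARD('a::{finite,field}) ^ j) :: 'a poly))"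
proof (rule injI)
  fix i j assume "fr (theta ^ (CARD('a) ^ i) :: 'a poly) = fr (theta ^ (CARD('a) ^ j))"
  hence "theta ^ (CARD('a) ^ i) = (theta ^ (CARD('a) ^ j) :: 'a poly)" by (simp only: fr_eq_iff)
  hence "CARD('a) ^ i = CARD('a) ^ j" by (rule theta_pow_inj)
  then show "i = j" using ff_card_ge2[where 'a='a] by (simp add: power_inject_exp)
qed

lemma interp:
  fixes w :: "'a::{finite,field} poly \<Rightarrow> 'a poly fract" and J :: "nat set"
  assumes fJ: "finite J" and cJ: "card J = k"
    and roots: "\<And>j. j \<in> J \<Longrightarrow> (\<Sum>a\<in>Mk k. w a * fr (a ^ (CARD('a) ^ j))) = 0"
  shows "(\<Sum>a\<in>Mk k. w a * poly (emb a) x) = (\<Sum>a\<in>Mk k. w a) * (\<Prod>j\<in>J. x - fr (theta ^ (CARD('a) ^ j)))"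
proof -
  define P where "P = (\<Sum>a\<in>Mk k. smult (w a) (emb a))"
  have polyP: "poly P y = (\<Sum>a\<in>Mk k. w a * poly (emb a) y)" for y by (simp add: P_def poly_sum)
  have dP: "degree P \<le> k" unfolding P_def
    by (intro degree_sum_le finite_Mk) (auto intro: order.trans[OF degree_smult_le] simp: degree_emb Mk_def)
  have cP: "coeff P k = (\<Sum>a\<in>Mk k. w a)" unfolding P_def coeff_sum
    by (intro sum.cong) (auto simp: coeff_emb Mk_def)
  define Z where "Z = (\<lambda>j. fr (theta ^ (CARD('a) ^ j) :: 'a poly)) ` J"
  have inj: "inj_on (\<lambda>j. fr (theta ^ (CARD('a) ^ j) :: 'a poly)) J"
    using theta_pow_q_inj by (rule inj_on_subset) simp
  have cZ: "card Z = k" unfolding Z_def using card_image[OF inj] cJ by simp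
  have fZ: "finite Z" unfolding Z_def using fJ by simp
  have rZ: "poly P z = 0" if "z \<in> Z" for z
    using that roots by (auto simp: Z_def polyP poly_emb_frob simp del: fr_pow)
  have "P = smult (coeff P k) (\<Prod>z\<in>Z. [:-z,1:])" by (rule roots_prod_eq[OF dP fZ cZ rZ])
  hence "poly P x = poly (smult (coeff P k) (\<Prod>z\<in>Z. [:-z,1:])) x"
    by (rule arg_cong[where f="\<lambda>p. poly p x"])
  also have "\<dots> = coeff P k * (\<Prod>z\<in>Z. x - z)" by (simp add: poly_prod)
  also have "(\<Prod>z\<in>Z. x - z) = (\<Prod>j\<in>J. x - fr (theta ^ (CARD('a) ^ j)))"
    unfolding Z_def by (simp add: prod.reindex[OF inj] del: fr_pow)
  finally show ?thesis using polyP cP by simp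
qed


section \<open>Carlitz-type identities\<close>

definition Dk :: "nat \<Rightarrow> 'a::{finite,field} poly" where "Dk k = (\<Prod>a\<in>Mk k. a)"
definition ck :: "nat \<Rightarrow> 'a::{finite,field} poly" where "ck k = (\<Prod>w\<in>Vk k - {0}. - w)"
definition sk :: "nat \<Rightarrow> 'a::{finite,field} poly fract" where "sk k = (\<Sum>a\<in>Mk k. 1 / fr a)"
definition Bk :: "nat \<Rightarrow> 'a::{finite,field} poly" where
  "Bk k = (\<Prod>j<k. theta ^ (CARD('a) ^ k) - theta ^ (CARD('a) ^ j))"

lemma ck_eq_cc: "ck k = fsub.cc (Vk k)"
  by (simp add: ck_def fsub.cc_def[OF fsub_Vk])

lemma ck_nonzero: "ck k \<noteq> 0"
proof -
  have "finite (Vk k - {0} :: 'a::{finite,field} poly set)" using finite_Vk by simp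
  then show ?thesis unfolding ck_def by (simp add: prod_zero_iff)
qed

lemma Dk_nonzero: "Dk k \<noteq> 0"
proof -
  have "finite (Mk k :: 'a::{finite,field} poly set)" by (rule finite_Mk)
  then show ?thesis unfolding Dk_def by (auto simp: prod_zero_iff dest: Mk_nonzero)
qed

lemma Dk_0: "Dk 0 = 1" by (simp add: Dk_def Mk_0)
lemma Bk_0: "Bk 0 = 1" by (simp add: Bk_def)
lemma ck_0: "ck 0 = 1" by (simp add: ck_def Vk_0)

lemma LD: "fr (ck k) = sk k * fr (Dk (k::nat) :: 'a::{finite,field} poly)"
proof -
  interpret fsub "Vk k :: 'a poly set" by (rule fsub_Vk)
  define x :: "'a poly" where "x = monom 1 k"
  have xv: "x - v \<noteq> 0" if "v \<in> Vk k" for v :: "'a poly"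
  proof
    assume "x - v = 0"
    hence "coeff (x - v) k = 0" by simp
    with that show False by (simp add: x_def Vk_def)
  qed
  have "ck k = poly (pderiv ee) x" by (simp add: pderiv_ee_const ck_eq_cc)
  also have "\<dots> = (\<Sum>v\<in>Vk k. \<Prod>w\<in>Vk k - {v}. x - w)" by (simp add: pderiv_ee poly_sum poly_prod)
  finally have "fr (ck k) = (\<Sum>v\<in>Vk k. \<Prod>w\<in>Vk k - {v}. fr (x - w))" by simp
  also have "\<dots> = (\<Sum>v\<in>Vk k. (\<Prod>w\<in>Vk k. fr (x - w)) * (1 / fr (x - v)))"
  proof (rule sum.cong[OF refl])
    fix v :: "'a poly" assume v: "v \<in> Vk k"
    have "(\<Prod>w\<in>Vk k. fr (x - w)) = fr (x - v) * (\<Prod>w\<in>Vk k - {v}. fr (x - w))"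
      using v fin by (simp add: prod.remove)
    then show "(\<Prod>w\<in>Vk k - {v}. fr (x - w)) = (\<Prod>w\<in>Vk k. fr (x - w)) * (1 / fr (x - v))"
      using xv[OF v] by (simp del: fr_diff)
  qed
  also have "\<dots> = (\<Prod>w\<in>Vk k. fr (x - w)) * (\<Sum>v\<in>Vk k. 1 / fr (x - v))"
    by (simp add: sum_distrib_left)
  also have "(\<Prod>w\<in>Vk k. fr (x - w)) = (\<Prod>w\<in>Vk k. fr (x + w))"
    by (rule prod.reindex_bij_witness[of _ "\<lambda>w. - w" "\<lambda>w. - w"]) (auto simp: neg_in simp del: fr_add fr_diff)
  also have "\<dots> = fr (Dk k)" by (simp add: Dk_def prod_Mk x_def)
  also have "(\<Sum>v\<in>Vk k. 1 / fr (x - v)) = (\<Sum>v\<in>Vk k. 1 / fr (x + v))"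
    by (rule sum.reindex_bij_witness[of _ "\<lambda>w. - w" "\<lambda>w. - w"]) (auto simp: neg_in simp del: fr_add fr_diff)
  also have "\<dots> = sk k" by (simp add: sk_def sum_Mk x_def del: fr_add)
  finally show ?thesis by (simp add: mult.commute)
qed

lemma inv_mult_pow: "(y::'b::field) \<noteq> 0 \<Longrightarrow> r \<le> n \<Longrightarrow> (1 / y ^ r) * y ^ n = y ^ (n - r)"
  by (simp add: power_diff)

lemma H_ident:
  assumes k: "k \<ge> 1"
  shows "fr (ck k) = sk k * fr (Bk k :: 'a::{finite,field} poly)"
proof -
  define q where "q = CARD('a)"
  have q2: "q \<ge> 2" using ff_card_ge2[where 'a='a] by (simp add: q_def)
  have I: "(\<Sum>a\<in>(Mk k :: 'a poly set). (1 / fr a) * poly (emb a) x) = (\<Sum>a\<in>(Mk k :: 'a poly set). 1 / fr a) * (\<Prod>j\<in>{..<k}. x - fr (theta ^ (CARD('a) ^ j)))" for x :: "'a poly fract"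
  proof (rule interp[where w="\<lambda>a. 1 / fr a" and J="{..<k}"])
    fix j assume j: "j \<in> {..<k}"
    have "(\<Sum>a\<in>(Mk k :: 'a poly set). 1 / fr a * fr (a ^ (q ^ j))) = (\<Sum>a\<in>(Mk k :: 'a poly set). fr (a ^ (q ^ j - 1)))"
    proof (rule sum.cong[OF refl])
      fix a :: "'a poly" assume "a \<in> Mk k"
      hence a0: "fr a \<noteq> 0" using Mk_nonzero by simp
      have "q ^ j \<ge> 1" using q2 by simp
      then show "1 / fr a * fr (a ^ (q ^ j)) = fr (a ^ (q ^ j - 1))"
        using inv_mult_pow[OF a0, of 1 "q^j"] by simp
    qed
    also have "\<dots> = fr (\<Sum>a\<in>(Mk k :: 'a poly set). a ^ (q ^ j - 1))" by (simp del: fr_pow)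
    also have "(\<Sum>a\<in>(Mk k :: 'a poly set). a ^ (q ^ j - 1)) = 0"
    proof (rule Mk_ps_zero)
      have "q ^ j * 2 \<le> q ^ j * q" using q2 by simp
      also have "\<dots> = q ^ Suc j" by (simp add: mult.commute)
      also have "\<dots> \<le> q ^ k" using j q2 by (intro power_increasing) auto
      finally have "q ^ j * 2 \<le> q ^ k" .
      moreover have "q ^ j \<ge> 1" using q2 by simp
      ultimately show "q ^ j - 1 + 2 \<le> CARD('a) ^ k" unfolding q_def by linarith
    qed
    finally show "(\<Sum>a\<in>(Mk k :: 'a poly set). 1 / fr a * fr (a ^ (CARD('a) ^ j))) = 0" by (simp add: q_def)
  qed auto
  have "fr (ck k) = fr (\<Sum>a\<in>(Mk k :: 'a poly set). a ^ (q ^ k - 1))"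
    unfolding q_def Mk_ps_top ck_eq_cc ..
  also have "\<dots> = (\<Sum>a\<in>(Mk k :: 'a poly set). (1 / fr a) * fr (a ^ (q ^ k)))"
  proof -
    have "fr (a ^ (q ^ k - 1)) = (1 / fr a) * fr (a ^ (q ^ k))" if "a \<in> Mk k" for a :: "'a poly"
    proof -
      have a0: "fr a \<noteq> 0" using Mk_nonzero that by simp
      have "q ^ k \<ge> 1" using q2 by simp
      then show ?thesis using inv_mult_pow[OF a0, of 1 "q^k"] by simp
    qed
    then show ?thesis by (simp del: fr_pow)
  qed
  also have "\<dots> = (\<Sum>a\<in>(Mk k :: 'a poly set). (1 / fr a) * poly (emb a) (fr (theta ^ (q ^ k))))"
    by (simp only: poly_emb_frob q_def)
  also have "\<dots> = sk k * (\<Prod>j\<in>{..<k}. fr (theta ^ (q ^ k)) - fr (theta ^ (CARD('a) ^ j)))"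
    by (simp only: I sk_def)
  also have "\<dots> = sk k * fr (Bk k)" by (simp add: Bk_def q_def del: fr_pow)
  finally show ?thesis .
qed


lemma Dk_eq_Bk: "Dk k = (Bk k :: 'a::{finite,field} poly)"
proof (cases "k = 0")
  case True then show ?thesis by (simp add: Dk_0 Bk_0)
next
  case False
  hence k: "k \<ge> 1" by simp
  have "sk k * fr (Dk k :: 'a poly) = sk k * fr (Bk k)" using LD[of k] H_ident[OF k] by metis
  moreover have "sk k \<noteq> (0 :: 'a poly fract)"
    using LD[of k] ck_nonzero[of k] by (metis fr_eq_0_iff mult_zero_left)
  ultimately show ?thesis by simp
qed

lemma ck_Suc: "ck (Suc k) = - ck k * Dk k ^ (CARD('a) - 1) * (1::'a::{finite,field} poly)"
proof -
  define f :: "'a \<times> 'a poly \<Rightarrow> 'a poly" where "f = (\<lambda>(c,v). monom c k + v)"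
  define h :: "'a poly \<Rightarrow> 'a poly" where "h = (\<lambda>w. if w = 0 then 1 else - w)"
  have ifz: "(\<Prod>w\<in>V. h w) = (\<Prod>w\<in>V - {0}. - w)" if "finite V" for V :: "'a poly set"
    using that by (intro prod.mono_neutral_cong_right) (auto simp: h_def)
  have "ck (Suc k) = (\<Prod>w\<in>Vk (Suc k). h w)" by (simp add: ck_def ifz finite_Vk)
  also have "\<dots> = (\<Prod>p\<in>UNIV \<times> Vk k. h (f p))"
    unfolding Vk_Suc f_def by (rule prod.reindex[OF Vk_Suc_inj, unfolded comp_def])
  also have "\<dots> = (\<Prod>c\<in>UNIV. \<Prod>v\<in>Vk k. h (f (c, v)))" by (rule prod.cartesian_product')
  also have "\<dots> = (\<Prod>v\<in>Vk k. h (f (0, v))) * (\<Prod>c\<in>UNIV - {0}. \<Prod>v\<in>Vk k. h (f (c, v)))"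
    by (simp add: prod.remove)
  also have "(\<Prod>v\<in>Vk k. h (f (0, v))) = ck k"
    by (simp add: f_def ck_def ifz finite_Vk)
  also have "(\<Prod>c\<in>UNIV - {0}. \<Prod>v\<in>Vk k. h (f (c, v))) = (\<Prod>c\<in>UNIV - {0}. [:-c:] * Dk k)"
  proof (rule prod.cong[OF refl])
    fix c :: 'a assume "c \<in> UNIV - {0}"
    hence c: "c \<noteq> 0" by simp
    have "(\<Prod>v\<in>Vk k. h (f (c, v))) = (\<Prod>v\<in>Vk k. [:-c:] * (monom 1 k + smult (inverse c) v))"
    proof (rule prod.cong[OF refl])
      fix v :: "'a poly" assume v: "v \<in> Vk k"
      have "coeff (monom c k + v) k = c" using v by (simp add: Vk_def)
      hence nz: "monom c k + v \<noteq> 0" using c by (metis coeff_0)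
      have "[:-c:] * (monom 1 k + smult (inverse c) v) = - (monom c k + v)"
        using c by (simp add: smult_add_right smult_monom monom_altdef)
      then show "h (f (c, v)) = [:-c:] * (monom 1 k + smult (inverse c) v)"
        using nz by (simp add: h_def f_def)
    qed
    also have "\<dots> = [:-c:] ^ card (Vk k :: 'a poly set) * (\<Prod>v\<in>Vk k. monom 1 k + smult (inverse c) v)"
      by (simp only: prod.distrib prod_constant)
    also have "[:-c:] ^ card (Vk k :: 'a poly set) = ([:-c:] :: 'a poly)"
      by (simp add: poly_const_pow card_Vk ff_pow_card_pow)
    also have "(\<Prod>v\<in>Vk k. monom 1 k + smult (inverse c) v) = (\<Prod>v\<in>Vk k. monom 1 k + v)"
      by (rule prod.reindex_bij_witness[of _ "\<lambda>v. smult c v" "\<lambda>v. smult (inverse c) v"])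
         (use c in \<open>auto simp: Vk_smult\<close>)
    also have "\<dots> = Dk k" by (simp add: Dk_def prod_Mk)
    finally show "(\<Prod>v\<in>Vk k. h (f (c, v))) = [:-c:] * Dk k" .
  qed
  also have "\<dots> = (\<Prod>c\<in>UNIV - {0}. [:-c:]) * Dk k ^ (CARD('a) - 1)"
    by (simp only: prod.distrib prod_constant card_Diff_singleton finite_UNIV UNIV_I card_UNIV)
  also have "(\<Prod>c\<in>UNIV - {0}. [:-c:]) = ([:-1:] :: 'a poly)"
    by (simp add: prod_to_poly wilson_ff)
  finally show ?thesis by simp
qed

lemma Bk_Suc: "Bk (Suc k) = (theta ^ (CARD('a) ^ Suc k) - theta) * (Bk k :: 'a::{finite,field} poly) ^ CARD('a)"
proof -
  define q where "q = CARD('a)"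
  have "(Bk k :: 'a poly) ^ q = (\<Prod>j<k. (theta ^ (q ^ k) - theta ^ (q ^ j)) ^ q)"
    by (simp add: Bk_def q_def prod_power_distrib)
  also have "\<dots> = (\<Prod>j<k. theta ^ (q ^ Suc k) - theta ^ (q ^ Suc j))"
    by (rule prod.cong[OF refl]) (simp add: q_def frob_diff flip: power_mult add: mult.commute)
  finally have e: "(Bk k :: 'a poly) ^ q = (\<Prod>j<k. theta ^ (q ^ Suc k) - theta ^ (q ^ Suc j))" .
  have "Bk (Suc k) = (theta ^ (q ^ Suc k) - theta ^ (q ^ 0)) * (\<Prod>j<k. theta ^ (q ^ Suc k) - (theta :: 'a poly) ^ (q ^ Suc j))"
    unfolding Bk_def q_def by (rule prod.lessThan_Suc_shift)
  then show ?thesis using e by (simp add: q_def)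
qed

lemma lcar_Suc: "lcar (Suc k) = lcar k * (theta - theta ^ (CARD('a) ^ Suc k) :: 'a::{finite,field} poly)"
  unfolding lcar_def by (simp add: prod.nat_ivl_Suc' mult.commute)

lemma ck_lcar: "ck k * lcar k = (Dk k :: 'a::{finite,field} poly)"
proof (induction k)
  case 0 then show ?case by (simp add: ck_0 Dk_0 lcar_def)
next
  case (Suc k)
  define q where "q = CARD('a)"
  have q2: "q \<ge> 2" using ff_card_ge2[where 'a='a] by (simp add: q_def)
  have "ck (Suc k) * lcar (Suc k) = - (ck k * lcar k) * Dk k ^ (q - 1) * (theta - theta ^ (q ^ Suc k) :: 'a poly)"
    by (simp add: ck_Suc lcar_Suc q_def mult_ac)
  also have "\<dots> = (theta ^ (q ^ Suc k) - theta) * Dk k ^ q"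
  proof -
    have qq: "q = Suc (q - 1)" using q2 by simp
    have "Dk k * Dk k ^ (q - 1) = (Dk k :: 'a poly) ^ Suc (q - 1)" by simp
    hence "Dk k * Dk k ^ (q - 1) = (Dk k :: 'a poly) ^ q" using qq by simp
    have "- (ck k * lcar k) * Dk k ^ (q - 1) * (theta - theta ^ (q ^ Suc k) :: 'a poly)
        = - (Dk k * Dk k ^ (q - 1)) * (theta - theta ^ (q ^ Suc k))" by (simp add: Suc.IH)
    also have "\<dots> = - (Dk k ^ q) * (theta - theta ^ (q ^ Suc k))" by (simp only: \<open>Dk k * Dk k ^ (q - 1) = Dk k ^ q\<close>)
    also have "\<dots> = (theta ^ (q ^ Suc k) - theta) * Dk k ^ q" by (simp add: algebra_simps)
    finally show ?thesis .
  qed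
  also have "\<dots> = Dk (Suc k)" by (simp add: Dk_eq_Bk Bk_Suc q_def)
  finally show ?case by (simp add: q_def)
qed

lemma sk_formula: "sk k = 1 / fr (lcar k :: 'a::{finite,field} poly)"
proof -
  have "sk k * fr (Dk k :: 'a poly) * fr (lcar k) = fr (Dk k)"
    using LD[of k] ck_lcar[of k] by (metis fr_mult)
  hence "fr (Dk k :: 'a poly) * (sk k * fr (lcar k)) = fr (Dk k) * 1" by (simp add: mult_ac)
  hence e: "sk k * fr (lcar k :: 'a poly) = 1" using Dk_nonzero[of k]
    by (subst (asm) mult_left_cancel) auto
  hence "fr (lcar k :: 'a poly) \<noteq> 0" by auto
  with e show ?thesis by (simp add: field_simps)
qed


section \<open>Power sums of exponent q^d - 2\<close>

lemma lcar_nonzero: "lcar k \<noteq> (0 :: 'a::{finite,field} poly)"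
  using sk_formula[of k] LD[of k] ck_nonzero[of k] by (metis div_by_0 fr_0 fr_eq_0_iff mult_zero_left)

lemma Spow_formula:
  assumes d: "d \<ge> 1"
  shows "fr (Spow k (CARD('a) ^ d - 2) :: 'a::{finite,field} poly) =
     fr (\<Prod>j\<in>{1..k}. theta ^ (CARD('a) ^ d) - theta ^ (CARD('a) ^ j) :: 'a poly) / fr (lcar k :: 'a poly) ^ 2"
proof -
  define q where "q = CARD('a)"
  have q2: "q \<ge> 2" using ff_card_ge2[where 'a='a] by (simp add: q_def)
  have qpow: "q ^ j \<ge> 2" if "j \<ge> 1" for j
  proof -
    have "q ^ 1 \<le> q ^ j" using that q2 by (intro power_increasing) auto
    then show ?thesis using q2 by simp
  qed
  have red: "(1 / fr a ^ 2) * fr (a ^ (q ^ j)) = fr (a ^ (q ^ j - 2))" if "a \<in> Mk k" "j \<ge> 1" for a :: "'a poly" and j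
  proof -
    have a0: "fr a \<noteq> 0" using Mk_nonzero that by simp
    show ?thesis using inv_mult_pow[OF a0, of 2 "q^j"] qpow[OF that(2)] by simp
  qed
  have I: "(\<Sum>a\<in>(Mk k :: 'a poly set). (1 / fr a ^ 2) * poly (emb a) x) = (\<Sum>a\<in>(Mk k :: 'a poly set). 1 / fr a ^ 2) * (\<Prod>j\<in>{1..k}. x - fr (theta ^ (CARD('a) ^ j)))" for x :: "'a poly fract"
  proof (rule interp[where w="\<lambda>a. 1 / fr a ^ 2" and J="{1..k}"])
    fix j assume j: "j \<in> {1..k}"
    have "(\<Sum>a\<in>(Mk k :: 'a poly set). 1 / fr a ^ 2 * fr (a ^ (q ^ j))) = (\<Sum>a\<in>(Mk k :: 'a poly set). fr (a ^ (q ^ j - 2)))"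
      using j by (intro sum.cong[OF refl] red) auto
    also have "\<dots> = fr (\<Sum>a\<in>(Mk k :: 'a poly set). a ^ (q ^ j - 2))" by (simp del: fr_pow)
    also have "(\<Sum>a\<in>(Mk k :: 'a poly set). a ^ (q ^ j - 2)) = 0"
    proof (rule Mk_ps_zero)
      have "q ^ j \<le> q ^ k" using j q2 by (intro power_increasing) auto
      then show "q ^ j - 2 + 2 \<le> CARD('a) ^ k" using qpow[of j] j by (simp add: q_def)
    qed
    finally show "(\<Sum>a\<in>(Mk k :: 'a poly set). 1 / fr a ^ 2 * fr (a ^ (CARD('a) ^ j))) = 0" by (simp add: q_def)
  qed auto
  define c2 where "c2 = (\<Sum>a\<in>(Mk k :: 'a poly set). 1 / fr a ^ 2)"
  have "sk k = (\<Sum>a\<in>(Mk k :: 'a poly set). (1 / fr a ^ 2) * poly (emb a) (fr theta))"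
  proof -
    have "(1 / fr a ^ 2) * poly (emb a) (fr theta) = 1 / fr a" if "a \<in> Mk k" for a :: "'a poly"
    proof -
      have a0: "fr a \<noteq> 0" using Mk_nonzero that by simp
      then show ?thesis by (simp add: poly_emb_theta power2_eq_square)
    qed
    then show ?thesis by (simp add: sk_def)
  qed
  also have "\<dots> = c2 * (\<Prod>j\<in>{1..k}. fr theta - fr (theta ^ (CARD('a) ^ j)))" by (simp only: I c2_def)
  also have "(\<Prod>j\<in>{1..k}. fr theta - fr (theta ^ (CARD('a) ^ j))) = fr (lcar k :: 'a poly)"
    by (simp add: lcar_def del: fr_pow)
  finally have "1 / fr (lcar k) = c2 * fr (lcar k :: 'a poly)" by (simp add: sk_formula)
  moreover have l0: "fr (lcar k :: 'a poly) \<noteq> 0" using lcar_nonzero[of k] by simp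
  ultimately have c2v: "c2 = 1 / fr (lcar k :: 'a poly) ^ 2"
    by (simp add: field_simps power2_eq_square)
  have "fr (Spow k (q ^ d - 2) :: 'a poly) = (\<Sum>a\<in>(Mk k :: 'a poly set). fr (a ^ (q ^ d - 2)))"
    by (simp add: Spow_def Mk_def del: fr_pow)
  also have "\<dots> = (\<Sum>a\<in>(Mk k :: 'a poly set). (1 / fr a ^ 2) * fr (a ^ (q ^ d)))"
    using d by (intro sum.cong[OF refl] red[symmetric]) auto
  also have "\<dots> = (\<Sum>a\<in>(Mk k :: 'a poly set). (1 / fr a ^ 2) * poly (emb a) (fr (theta ^ (q ^ d))))"
    by (simp only: poly_emb_frob q_def)
  also have "\<dots> = c2 * (\<Prod>j\<in>{1..k}. fr (theta ^ (q ^ d)) - fr (theta ^ (CARD('a) ^ j)))"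
    by (simp only: I c2_def)
  also have "(\<Prod>j\<in>{1..k}. fr (theta ^ (q ^ d)) - fr (theta ^ (CARD('a) ^ j))) =
      fr (\<Prod>j\<in>{1..k}. theta ^ (CARD('a) ^ d) - theta ^ (CARD('a) ^ j) :: 'a poly)"
    by (simp add: q_def del: fr_pow)
  finally show ?thesis by (simp add: c2v q_def)
qed


lemma telescope:
  fixes c g :: "nat \<Rightarrow> 'b::comm_ring_1"
  shows "(\<Sum>i\<in>{1..d}. \<Sum>j<i. (c i - c (i - 1)) * g j) = (\<Sum>j<d. (c d - c j) * g j)"
proof (induction d)
  case 0 then show ?case by simp
next
  case (Suc d)
  have "(\<Sum>i\<in>{1..Suc d}. \<Sum>j<i. (c i - c (i - 1)) * g j) =
      (\<Sum>j<Suc d. (c (Suc d) - c d) * g j) + (\<Sum>i\<in>{1..d}. \<Sum>j<i. (c i - c (i - 1)) * g j)"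
    by (simp add: sum.nat_ivl_Suc')
  also have "\<dots> = (\<Sum>j<Suc d. (c (Suc d) - c d) * g j) + (\<Sum>j<d. (c d - c j) * g j)"
    by (simp only: Suc.IH)
  also have "\<dots> = (\<Sum>j<d. (c (Suc d) - c d) * g j + (c d - c j) * g j) + (c (Suc d) - c d) * g d"
    by (simp add: sum.distrib)
  also have "\<dots> = (\<Sum>j<Suc d. (c (Suc d) - c j) * g j)"
    by (simp add: algebra_simps)
  finally show ?case .
qed

lemma prod_1_shift: "(\<Prod>j\<in>{1..m}. f j) = (\<Prod>k<m. f (Suc k) :: 'b::comm_monoid_mult)"
  by (induction m) (simp_all add: prod.nat_ivl_Suc' mult.commute)

theorem main_fr:
  fixes d :: nat
  assumes d: "d \<ge> 1"
  shows "fr (BG (CARD('a) ^ d - 2) :: 'a::{finite,field} poly) =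
    - (\<Sum>i\<in>{1..d}. \<Sum>j<i. fr (bcar d i :: 'a poly) / (fr (lcar i :: 'a poly) * fr (lcar j :: 'a poly)))"
proof -
  define q where "q = CARD('a)"
  define n where "n = q ^ d - 2"
  define T :: "'a poly" where "T = theta ^ (q ^ d)"
  define P :: "nat \<Rightarrow> 'a poly" where "P i = (\<Prod>j\<in>{1..i}. T - theta ^ (q ^ j))" for i
  define c :: "nat \<Rightarrow> 'a poly fract" where "c i = fr (P i) / fr (lcar i)" for i
  have Sf: "fr (Spow k n :: 'a poly) = fr (P k) / fr (lcar k :: 'a poly) ^ 2" for k
    unfolding n_def P_def T_def q_def by (rule Spow_formula[OF d])
  have Pz: "P k = 0" if "k \<ge> d" for k
    unfolding P_def using that d by (intro prod_zero) (auto simp: T_def intro!: bexI[of _ d])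
  have Sz: "Spow k n = (0 :: 'a poly)" if "k \<ge> d" for k
    using Sf[of k] Pz[OF that] by simp
  have BG: "BG n = (\<Sum>k<d. Spow k n :: 'a poly)"
    unfolding BG_def
  proof (rule sum.mono_neutral_left)
    show "{k. Spow k n \<noteq> (0::'a poly)} \<subseteq> {..<d}" using Sz by (auto simp: not_less[symmetric])
  qed auto
  have l0: "fr (lcar i :: 'a poly) \<noteq> 0" for i using lcar_nonzero[of i] by simp
  have "fr (BG n :: 'a poly) = (\<Sum>k<d. c k * (1 / fr (lcar k)))"
    unfolding BG fr_sum
    by (intro sum.cong[OF refl]) (simp add: Sf c_def power2_eq_square del: fr_pow)
  also have "\<dots> = - (\<Sum>j<d. (c d - c j) * (1 / fr (lcar j)))"
    using Pz[of d] by (simp add: c_def sum_negf[symmetric] del: fr_pow)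
  also have "(\<Sum>j<d. (c d - c j) * (1 / fr (lcar j))) = (\<Sum>i\<in>{1..d}. \<Sum>j<i. (c i - c (i - 1)) * (1 / fr (lcar j)))"
    by (rule telescope[symmetric])
  also have "\<dots> = (\<Sum>i\<in>{1..d}. \<Sum>j<i. fr (bcar d i :: 'a poly) / (fr (lcar i :: 'a poly) * fr (lcar j :: 'a poly)))"
  proof (intro sum.cong[OF refl])
    fix i j assume i: "i \<in> {1..d}"
    then obtain m where m: "i = Suc m" by (cases i) auto
    have Pi: "P (Suc m) = P m * (T - theta ^ (q ^ Suc m))"
      unfolding P_def by (simp add: prod.nat_ivl_Suc')
    have Bi: "bcar d (Suc m) = (T - theta) * P m"
    proof -
      have "bcar d (Suc m) = (T - theta ^ (q ^ 0)) * (\<Prod>k<m. T - theta ^ (q ^ Suc k))"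
        unfolding bcar_def T_def q_def by (rule prod.lessThan_Suc_shift)
      also have "(\<Prod>k<m. T - theta ^ (q ^ Suc k)) = P m" unfolding P_def prod_1_shift ..
      finally show ?thesis by simp
    qed
    have ci: "c i - c (i - 1) = fr (bcar d i :: 'a poly) / fr (lcar i)"
      using l0[of m] l0[of "Suc m"]
      by (simp add: m c_def Pi Bi lcar_Suc q_def field_simps del: fr_pow)
    show "(c i - c (i - 1)) * (1 / fr (lcar j)) = fr (bcar d i :: 'a poly) / (fr (lcar i :: 'a poly) * fr (lcar j :: 'a poly))"
      unfolding ci by simp
  qed
  finally show ?thesis by (simp add: n_def q_def)
qed

theorem theorem5p1:
  fixes d :: nat
  assumes "CARD('a::{finite,field}) > 2" and "d \<ge> 1"
  shows "Fract (BG (CARD('a) ^ d - 2) :: 'a poly) 1 =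
    - (\<Sum>i\<in>{1..d}. \<Sum>j<i.
         Fract (bcar d i :: 'a poly) 1 / (Fract (lcar i :: 'a poly) 1 * Fract (lcar j :: 'a poly) 1))"
  using main_fr[OF assms(2)] by (simp only: fr_def)

end
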